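(* Let $n\in\mathbb{N}$, $A_n=\{(i,j)\in\mathbb{Z}^2:0\le i,j\le 14n\}$ and $\tau(x,y)=(x,(28n)^y)$. Let $p_1=(a_1,b_1)$, $p_2=(a_2,b_2)$, $p_3=(a_3,b_3)\in A_n$ with $\max(b_1,b_2)<b_3$, and let $\Box=(\min(a_1,a_2),\max(a_1,a_2))\times(\max(b_1,b_2),b_3)$ (an open axis-aligned rectangle, possibly empty). Then for every $p\in A_n\cap\Box$, the point $\tau(p)$ lies in the interior of the triangle with vertices $\tau(p_1),\tau(p_2),\tau(p_3)$. *)

theory Defs
  imports "HOL-Analysis.Analysis"
begin

definition grid :: "nat \<Rightarrow> (int \<times> int) set" where
  "grid n = {(i, j). 0 \<le> i \<and> i \<le> int (14 * n) \<and> 0 \<le> j \<and> j \<le> int (14 * n)}"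

text \<open>tau(x,y) = (x, (28n)^y), used on points of the grid (y >= 0).\<close>
definition tau :: "nat \<Rightarrow> int \<times> int \<Rightarrow> real \<times> real" where
  "tau n p = (real_of_int (fst p), real (28 * n) ^ nat (snd p))"

definition box :: "int \<Rightarrow> int \<Rightarrow> int \<Rightarrow> int \<Rightarrow> int \<Rightarrow> (real \<times> real) set" where
  "box a1 a2 b1 b2 b3 =
     {real_of_int (min a1 a2) <..< real_of_int (max a1 a2)} \<times> {real_of_int (max b1 b2) <..< real_of_int b3}"

end

theory Submission
  imports Defs
begin

definition cr :: "real \<times> real \<Rightarrow> real \<times> real \<Rightarrow> real \<times> real \<Rightarrow> real" where
  "cr u v q = (fst u - fst q)*(snd v - snd q) - (snd u - snd q)*(fst v - fst q)"

lemma tri_interior: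
  fixes P1 P2 P3 q :: "real \<times> real"
  assumes "cr P2 P3 q > 0" "cr P3 P1 q > 0" "cr P1 P2 q > 0"
  shows "q \<in> interior (convex hull {P1,P2,P3})"
proof -
  define S where "S = {q. cr P2 P3 q > 0 \<and> cr P3 P1 q > 0 \<and> cr P1 P2 q > 0}"
  have "open S" unfolding S_def cr_def
    by (intro open_Collect_conj open_Collect_less continuous_intros)
  moreover have "S \<subseteq> convex hull {P1,P2,P3}"
  proof
    fix z assume z: "z \<in> S"
    define f1 where "f1 = cr P2 P3 z"
    define f2 where "f2 = cr P3 P1 z"
    define f3 where "f3 = cr P1 P2 z"
    define D where "D = f1 + f2 + f3"
    have pos: "f1 > 0" "f2 > 0" "f3 > 0" using z unfolding S_def f1_def f2_def f3_def by auto
    hence D: "D > 0" unfolding D_def by simp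
    have id1: "f1 * fst P1 + f2 * fst P2 + f3 * fst P3 = D * fst z"
      unfolding D_def f1_def f2_def f3_def cr_def by (simp add: algebra_simps)
    have id2: "f1 * snd P1 + f2 * snd P2 + f3 * snd P3 = D * snd z"
      unfolding D_def f1_def f2_def f3_def cr_def by (simp add: algebra_simps)
    have "z = (f1/D) *\<^sub>R P1 + (f2/D) *\<^sub>R P2 + (f3/D) *\<^sub>R P3"
      using id1 id2 D by (simp add: prod_eq_iff field_simps)
    moreover have "f1/D + f2/D + f3/D = 1"
    proof -
      have "f1/D + f2/D + f3/D = (f1+f2+f3)/D" by (simp add: add_divide_distrib)
      also have "\<dots> = 1" using D by (simp add: D_def)
      finally show ?thesis .
    qed
    ultimately show "z \<in> convex hull {P1,P2,P3}"
      unfolding convex_hull_3 using pos D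
      by (intro CollectI exI[of _ "f1/D"] exI[of _ "f2/D"] exI[of _ "f3/D"]) auto
  qed
  moreover have "q \<in> S" using assms S_def by auto
  ultimately show ?thesis using interior_maximal by blast
qed

lemma key:
  fixes a1 a2 a3 x Y1 Y2 Y3 Y N :: real
  assumes "x - a1 \<ge> 1" "a2 - x \<ge> 1" "\<bar>a3 - x\<bar> \<le> N/2" "N \<ge> 28" "0 < Y1" "0 < Y2"
    "N*Y1 \<le> Y" "N*Y2 \<le> Y" "N*Y \<le> Y3"
  shows "(a2-x)*(Y3-Y) + (Y-Y2)*(a3-x) > 0"
    "(x-a1)*(Y3-Y) - (a3-x)*(Y-Y1) > 0"
    "(x-a1)*(Y-Y2) + (a2-x)*(Y-Y1) > 0"
proof -
  have N: "N > 1" using assms by simp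
  have "0 < N*Y2" using assms N by simp
  hence Y: "Y > 0" using assms by linarith
  have "1*Y2 < N*Y2" "1*Y1 < N*Y1" using N assms by (intro mult_strict_right_mono; simp)+
  hence Y2: "Y2 < Y" "Y1 < Y" using assms by linarith+
  have "1*Y \<le> N*Y" using N Y by (intro mult_right_mono) auto
  hence Y3: "Y3 - Y \<ge> 0" using assms by linarith
  have a: "(a2-x)*(Y3-Y) \<ge> 1*(Y3-Y)" using assms(2) Y3 by (intro mult_right_mono) auto
  have b: "\<bar>(Y-Y2)*(a3-x)\<bar> \<le> Y * (N/2)"
    unfolding abs_mult using Y2 assms by (intro mult_mono) auto
  have c: "(x-a1)*(Y3-Y) \<ge> 1*(Y3-Y)" using assms(1) Y3 by (intro mult_right_mono) auto
  have d: "\<bar>(a3-x)*(Y-Y1)\<bar> \<le> (N/2) * Y"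
    unfolding abs_mult using Y2 assms by (intro mult_mono) auto
  have "Y*(N/2-1) > 0" using Y assms by simp
  moreover have "Y*(N/2-1) = N*Y - Y - Y*(N/2)" by (simp add: algebra_simps)
  ultimately have "Y3 - Y - Y*(N/2) > 0" using assms by linarith
  note h = this
  have gen: "\<And>T1 T2 W (Z::real). 0 < W - Z \<Longrightarrow> 1*W \<le> T1 \<Longrightarrow> \<bar>T2\<bar> \<le> Z \<Longrightarrow> 0 < T1 + T2" by linarith
  show "(a2-x)*(Y3-Y) + (Y-Y2)*(a3-x) > 0" using gen[OF _ a b] h by (simp add: algebra_simps)
  have d': "\<bar>-((a3-x)*(Y-Y1))\<bar> \<le> Y*(N/2)" using d by (simp add: mult.commute)
  show "(x-a1)*(Y3-Y) - (a3-x)*(Y-Y1) > 0" using gen[OF _ c d'] h by (simp add: algebra_simps)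
  have "(x-a1)*(Y-Y2) > 0" "(a2-x)*(Y-Y1) > 0" using assms Y2 by auto
  then show "(x-a1)*(Y-Y2) + (a2-x)*(Y-Y1) > 0" by linarith
qed

lemma aux:
  fixes n :: nat and a1 b1 a2 b2 a3 b3 :: int and p :: "int \<times> int"
  assumes "(a1, b1) \<in> grid n" and "(a2, b2) \<in> grid n" and "(a3, b3) \<in> grid n"
    and "max b1 b2 < b3"
    and "p \<in> grid n"
    and "(real_of_int (fst p), real_of_int (snd p)) \<in> box a1 a2 b1 b2 b3"
    and "a1 < a2"
  shows "tau n p \<in> interior (convex hull {tau n (a1, b1), tau n (a2, b2), tau n (a3, b3)})"
proof -
  obtain x y where p: "p = (x, y)" by (cases p)
  have bx: "a1 < x" "x < a2" "b1 < y" "b2 < y" "y < b3"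
    using assms(6,7) unfolding p box_def by auto
  have g: "0 \<le> a1" "a2 \<le> 14*int n" "0 \<le> a3" "a3 \<le> 14*int n" "0 \<le> x" "x \<le> 14*int n"
     "0 \<le> b1" "0 \<le> b2" "0 \<le> y" "0 \<le> b3"
    using assms(1,2,3,5) unfolding p grid_def by auto
  define N where "N = real (28*n)"
  have n: "n \<ge> 1" using bx g by linarith
  have N28: "N \<ge> 28" using n unfolding N_def by simp
  have N1: "N \<ge> 1" using N28 by simp
  have pw: "N * N^k \<le> N^m" if "Suc k \<le> m" for k m
    using power_increasing[OF that N1] by simp
  have e1: "N * N^nat b1 \<le> N^nat y" using bx g by (intro pw) linarith
  have e2: "N * N^nat b2 \<le> N^nat y" using bx g by (intro pw) linarith
  have e3: "N * N^nat y \<le> N^nat b3" using bx g by (intro pw) linarith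
  have x1: "real_of_int x - real_of_int a1 \<ge> 1" "real_of_int a2 - real_of_int x \<ge> 1" using bx by linarith+
  have "\<bar>a3 - x\<bar> \<le> 14 * int n" using g by linarith
  hence "real_of_int \<bar>a3 - x\<bar> \<le> real_of_int (14 * int n)" by (simp only: of_int_le_iff)
  hence x3: "\<bar>real_of_int a3 - real_of_int x\<bar> \<le> N/2" unfolding N_def by simp
  have pos: "0 < N^nat b1" "0 < N^nat b2" using N28 by auto
  note k = key[OF x1 x3 N28 pos e1 e2 e3]
  show ?thesis
    apply (rule tri_interior)
    using k by (simp_all add: cr_def tau_def p N_def algebra_simps)
qed

theorem lemma8:
  fixes n :: nat and a1 b1 a2 b2 a3 b3 :: int and p :: "int \<times> int"
  assumes "(a1, b1) \<in> grid n" and "(a2, b2) \<in> grid n" and "(a3, b3) \<in> grid n"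
    and "max b1 b2 < b3"
    and "p \<in> grid n"
    and "(real_of_int (fst p), real_of_int (snd p)) \<in> box a1 a2 b1 b2 b3"
  shows "tau n p \<in> interior (convex hull {tau n (a1, b1), tau n (a2, b2), tau n (a3, b3)})"
proof (cases "a1 < a2")
  case True
  then show ?thesis using aux[OF assms] by blast
next
  case False
  have "a1 \<noteq> a2" using assms(6) unfolding box_def by auto
  with False have lt: "a2 < a1" by simp
  have m: "max b2 b1 < b3" using assms(4) by simp
  have bx: "(real_of_int (fst p), real_of_int (snd p)) \<in> box a2 a1 b2 b1 b3"
    using assms(6) unfolding box_def by (simp add: min.commute max.commute)
  have "tau n p \<in> interior (convex hull {tau n (a2, b2), tau n (a1, b1), tau n (a3, b3)})"
    using aux[OF assms(2,1,3) m assms(5) bx lt] .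
  then show ?thesis by (simp add: insert_commute)
qed

end
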